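(* Let $k\ge1$ and $\epsilon$ with $0\le\epsilon\le1/2$, and assume $m^{\epsilon}\le\sqrt n$. Any deterministic coverage oracle that stores a datastructure of at most $b=nm^{1-2\epsilon}$ bits does not attain an approximation ratio of $O\!\left(\frac{m^{\epsilon-\delta}}{k\sqrt k}\right)$ for any constant $\delta>0$.
   Context: A set system with $n$ items and $m$ sets is a pair $(\mathcal X,\mathcal I)$ with $\mathcal X=\{1,\dots,n\}$ and $\mathcal I$ an indexed family of $m$ subsets of $\mathcal X$. For $k\ge1$ and a query $Q\subseteq\mathcal X$, $OPT(k,\mathcal X,\mathcal I,Q)=\max\{|(\bigcup_{S\in\mathcal J}S)\cap Q| : \mathcal J\subseteq\mathcal I,|\mathcal J|\le k\}$. A deterministic coverage oracle consists of a deterministic static stage mapping $(n,m,k,(\mathcal X,\mathcal I))$ to a bit string $\mathcal D$ (the datastructure), and a deterministic dynamic stage mapping $(\mathcal D,Q)$, for $Q\subseteq\mathcal X$, to (indices of) $\mathcal J\subseteq\mathcal I$ with $|\mathcal J|\le k$, without access to $(\mathcal X,\mathcal I)$; $\mathcal A(k,\mathcal X,\mathcal I,Q)=|(\bigcup_{S\in\mathcal J}S)\cap Q|$. The approximation ratio is $\max OPT/\mathcal A$ over all set systems with $n$ items and $m$ sets and all queries $Q$. No computational restrictions are assumed. *)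

theory Defs
  imports Complex_Main
begin

text \<open>A set system with n items and m sets: the items are 1..n and the indexed family
  is a list of length m of subsets of {1..n}; the sets are indexed by 0..<m.\<close>
definition set_system :: "nat \<Rightarrow> nat \<Rightarrow> nat set list \<Rightarrow> bool" where
  "set_system n m I \<longleftrightarrow> length I = m \<and> (\<forall>S\<in>set I. S \<subseteq> {1..n})"

definition covered :: "nat set list \<Rightarrow> nat set \<Rightarrow> nat set \<Rightarrow> nat" where
  "covered I J Q = card ((\<Union>i\<in>J. I ! i) \<inter> Q)"

definition OPT :: "nat \<Rightarrow> nat set list \<Rightarrow> nat set \<Rightarrow> nat" where
  "OPT k I Q = Max {covered I J Q | J. J \<subseteq> {..<length I} \<and> card J \<le> k}"

text \<open>A deterministic coverage oracle: a static stage mapping (n,m,k,system) to a bit string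
  and a dynamic stage mapping (datastructure, query) to a set of at most k set indices.\<close>
type_synonym static_stage = "nat \<Rightarrow> nat \<Rightarrow> nat \<Rightarrow> nat set list \<Rightarrow> bool list"
type_synonym dynamic_stage = "bool list \<Rightarrow> nat set \<Rightarrow> nat set"

definition coverage_oracle :: "nat \<Rightarrow> static_stage \<Rightarrow> dynamic_stage \<Rightarrow> bool" where
  "coverage_oracle k st dy \<longleftrightarrow>
     (\<forall>n m I Q. set_system n m I \<longrightarrow> Q \<subseteq> {1..n} \<longrightarrow>
        dy (st n m k I) Q \<subseteq> {..<m} \<and> card (dy (st n m k I) Q) \<le> k)"

definition ALG :: "static_stage \<Rightarrow> dynamic_stage \<Rightarrow> nat \<Rightarrow> nat \<Rightarrow> nat \<Rightarrow> nat set list \<Rightarrow> nat set \<Rightarrow> nat" where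
  "ALG st dy n m k I Q = covered I (dy (st n m k I) Q) Q"

text \<open>The approximation ratio (max of OPT/A over all systems with n items, m sets and all
  queries) is at most r; stated multiplicatively so that A = 0 is handled correctly.\<close>
definition ratio_at_most :: "static_stage \<Rightarrow> dynamic_stage \<Rightarrow> nat \<Rightarrow> nat \<Rightarrow> nat \<Rightarrow> real \<Rightarrow> bool" where
  "ratio_at_most st dy n m k r \<longleftrightarrow>
     (\<forall>I Q. set_system n m I \<longrightarrow> Q \<subseteq> {1..n} \<longrightarrow>
        real (OPT k I Q) \<le> r * real (ALG st dy n m k I Q))"

end

theory Submission
  imports Defs "HOL-Computational_Algebra.Polynomial" "HOL-Computational_Algebra.Primes" "HOL-Combinatorics.Permutations"
begin

lemma dvd_diff_small:
  fixes a b p :: nat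
  assumes "a < p" "b < p" "int p dvd (int a - int b)"
  shows "a = b"
proof -
  obtain q where q: "int a - int b = int p * q" using assms(3) by blast
  have "q = 0"
  proof (rule ccontr)
    assume "q \<noteq> 0"
    then have "1 \<le> \<bar>q\<bar>" by simp
    then have "int p * 1 \<le> int p * \<bar>q\<bar>" by (intro mult_left_mono) auto
    then have "int p \<le> \<bar>int a - int b\<bar>" using q by (simp add: abs_mult)
    then show False using assms(1,2) by simp
  qed
  then show ?thesis using q by simp
qed

lemma digits_eq:
  fixes p :: nat
  shows "(\<forall>i<d. c div p^i mod p = c' div p^i mod p) \<Longrightarrow> c mod p^d = c' mod p^d"
proof (induction d)
  case 0 then show ?case by simp
next
  case (Suc d)
  then have h: "c mod p^d = c' mod p^d" and e: "c div p^d mod p = c' div p^d mod p" by auto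
  have "c mod p^Suc d = p^d*(c div p^d mod p) + c mod p^d" by (metis power_Suc2 mod_mult2_eq)
  moreover have "c' mod p^Suc d = p^d*(c' div p^d mod p) + c' mod p^d" by (metis power_Suc2 mod_mult2_eq)
  ultimately show ?case using h e by simp
qed

definition itm :: "nat \<Rightarrow> nat \<Rightarrow> nat \<Rightarrow> nat" where "itm p x y = 1 + x*p + y"
definition fv :: "nat \<Rightarrow> nat \<Rightarrow> nat \<Rightarrow> nat \<Rightarrow> nat" where
  "fv p d c x = (\<Sum>i<d. (c div p^i mod p) * x^i)"
definition W :: "nat \<Rightarrow> nat \<Rightarrow> nat \<Rightarrow> nat set" where
  "W p d c = (\<lambda>x. itm p x (fv p d c x mod p)) ` {..<p}"

lemma itm_inj:
  assumes "y < p" "y' < p" "itm p x y = itm p x' y'"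
  shows "x = x' \<and> y = y'"
proof -
  have E: "x*p + y = x'*p + y'" using assms(3) by (simp add: itm_def)
  have "0 < p" using assms(1) by simp
  have A: "(x*p + y) div p = x" "(x*p + y) mod p = y" using assms(1) \<open>0<p\<close> by simp_all
  have B: "(x'*p + y') div p = x'" "(x'*p + y') mod p = y'" using assms(2) \<open>0<p\<close> by simp_all
  show ?thesis using A B E by metis
qed

lemma W_sub: "0 < p \<Longrightarrow> W p d c \<subseteq> {1..p*p}"
proof
  fix z assume p: "0 < p" and "z \<in> W p d c"
  then obtain x where x: "x < p" "z = itm p x (fv p d c x mod p)" by (auto simp: W_def)
  have "x*p + fv p d c x mod p < x*p + p" using p by simp
  also have "\<dots> = (x+1)*p" by simp
  also have "\<dots> \<le> p*p" using x by (intro mult_right_mono) auto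
  finally have "x*p + fv p d c x mod p < p * p" .
  then show "z \<in> {1..p*p}" using x by (simp add: itm_def)
qed

lemma card_W: "0 < p \<Longrightarrow> card (W p d c) = p"
  unfolding W_def
  by (subst card_image) (auto simp: inj_on_def dest: itm_inj[rotated 2])

lemma roots_bound:
  fixes p :: nat and f :: "int poly"
  assumes p: "prime p" and nd: "\<not> [:int p:] dvd f"
  shows "card {x \<in> {..<p}. int p dvd poly f (int x)} \<le> degree f"
  using nd
proof (induction "degree f" arbitrary: f)
  case 0
  then obtain c where f: "f = [:c:]" by (metis degree_eq_zeroE)
  have "{x \<in> {..<p}. int p dvd poly f (int x)} = {}"
  proof (rule ccontr)
    assume "{x \<in> {..<p}. int p dvd poly f (int x)} \<noteq> {}"
    then have "int p dvd c" using f by auto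
    then obtain e where "c = int p * e" by blast
    then have "f = [:int p:] * [:e:]" using f by simp
    then show False using 0 by auto
  qed
  then have "card {x \<in> {..<p}. int p dvd poly f (int x)} = 0" by (simp only: card.empty)
  then show ?case by linarith
next
  case (Suc d f)
  show ?case
  proof (cases "{x \<in> {..<p}. int p dvd poly f (int x)} = {}")
    case True then have "card {x \<in> {..<p}. int p dvd poly f (int x)} = 0" by (simp only: card.empty)
    then show ?thesis by linarith
  next
    case False
    then obtain r where r: "r < p" "int p dvd poly f (int r)" by auto
    define g where "g = synthetic_div f (int r)"
    have fg: "f = [:- int r, 1:] * g + [:poly f (int r):]"
      unfolding g_def by (rule synthetic_div_correct'[symmetric])
    have dg: "degree g = d" using Suc(2) unfolding g_def by (simp add: degree_synthetic_div)
    have ng: "\<not> [:int p:] dvd g"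
    proof
      assume "[:int p:] dvd g"
      moreover obtain e where "poly f (int r) = int p * e" using r by blast
      then have "[:int p:] dvd [:poly f (int r):]" by (simp add: dvd_def) (metis mult_commute_abs smult_pCons pCons_0_0 smult_0_right mult_smult_left mult_pCons_left)
      ultimately have "[:int p:] dvd f" using fg by (metis dvd_add dvd_mult)
      then show False using Suc(3) by simp
    qed
    have IH: "card {x \<in> {..<p}. int p dvd poly g (int x)} \<le> d"
      using Suc(1)[of g] dg ng by simp
    have sub: "{x \<in> {..<p}. int p dvd poly f (int x)} \<subseteq> insert r {x \<in> {..<p}. int p dvd poly g (int x)}"
    proof
      fix x assume x: "x \<in> {x \<in> {..<p}. int p dvd poly f (int x)}"
      have pe: "poly f (int x) = (int x - int r) * poly g (int x) + poly f (int r)"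
        by (subst fg) (simp add: algebra_simps)
      have "int p dvd (int x - int r) * poly g (int x)"
        using x r pe by (metis dvd_add_left_iff mem_Collect_eq)
      moreover have "prime (int p)" using p by simp
      ultimately have "int p dvd (int x - int r) \<or> int p dvd poly g (int x)"
        using prime_dvd_mult_iff by blast
      moreover have "int p dvd (int x - int r) \<Longrightarrow> x = r"
      proof -
        assume a: "int p dvd (int x - int r)"
        have "\<bar>int x - int r\<bar> < int p" using x r by auto
        obtain q where q: "int x - int r = int p * q" using a by blast
        have "q = 0"
        proof (rule ccontr)
          assume "q \<noteq> 0"
          then have "1 \<le> \<bar>q\<bar>" by simp
          then have "int p * 1 \<le> int p * \<bar>q\<bar>" by (intro mult_left_mono) auto
          then have "int p \<le> \<bar>int x - int r\<bar>" using q by (simp add: abs_mult)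
          then show False using \<open>\<bar>int x - int r\<bar> < int p\<close> by simp
        qed
        then show "x = r" using q by simp
      qed
      ultimately show "x \<in> insert r {x \<in> {..<p}. int p dvd poly g (int x)}" using x by auto
    qed
    have "card {x \<in> {..<p}. int p dvd poly f (int x)} \<le> card (insert r {x \<in> {..<p}. int p dvd poly g (int x)})"
      by (rule card_mono[OF _ sub]) auto
    also have "\<dots> \<le> Suc d" using IH by (auto simp add: card_insert_if)
    finally show ?thesis using Suc(2) by simp
  qed
qed

lemma W_inter:
  assumes p: "prime p" and c: "c < p^d" "c' < p^d" "c \<noteq> c'"
  shows "card (W p d c \<inter> W p d c') \<le> d"
proof -
  have p0: "0 < p" using p prime_gt_0_nat by blast
  define F :: "int poly" where "F = (\<Sum>i<d. monom (int (c div p^i mod p) - int (c' div p^i mod p)) i)"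
  have polyF: "poly F (int x) = int (fv p d c x) - int (fv p d c' x)" for x
    unfolding F_def fv_def by (simp add: poly_sum poly_monom sum_subtractf algebra_simps)
  have degF: "degree F \<le> d" unfolding F_def
    by (rule degree_sum_le) (auto intro: order.trans[OF degree_monom_le])
  have coeffF: "coeff F i = int (c div p^i mod p) - int (c' div p^i mod p)" if "i < d" for i
    using that unfolding F_def by (simp add: coeff_sum coeff_monom)
  have ndvd: "\<not> [:int p:] dvd F"
  proof
    assume "[:int p:] dvd F"
    then obtain h where h: "F = [:int p:] * h" by (auto simp: dvd_def)
    have "c div p^i mod p = c' div p^i mod p" if "i < d" for i
    proof (rule dvd_diff_small)
      show "c div p^i mod p < p" "c' div p^i mod p < p" using p0 by simp_all
      have "coeff F i = int p * coeff h i" using h by simp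
      then show "int p dvd int (c div p^i mod p) - int (c' div p^i mod p)" using coeffF[OF that] by simp
    qed
    then have "c mod p^d = c' mod p^d" using digits_eq by blast
    then show False using c by simp
  qed
  have sub: "W p d c \<inter> W p d c' \<subseteq> (\<lambda>x. itm p x (fv p d c x mod p)) ` {x\<in>{..<p}. int p dvd poly F (int x)}"
  proof
    fix z assume z: "z \<in> W p d c \<inter> W p d c'"
    then obtain x x' where x: "x < p" "z = itm p x (fv p d c x mod p)"
      and x': "x' < p" "z = itm p x' (fv p d c' x' mod p)" by (auto simp: W_def)
    have "x = x' \<and> fv p d c x mod p = fv p d c' x' mod p"
      using x x' p0 by (intro itm_inj[of _ p]) auto
    then have e: "x = x'" "fv p d c x mod p = fv p d c' x mod p" by auto
    then have "int (fv p d c x) mod int p = int (fv p d c' x) mod int p" by (simp flip: of_nat_mod)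
    then have "int p dvd poly F (int x)" unfolding polyF by (simp add: mod_eq_dvd_iff)
    then show "z \<in> (\<lambda>x. itm p x (fv p d c x mod p)) ` {x\<in>{..<p}. int p dvd poly F (int x)}"
      using x by auto
  qed
  have "card (W p d c \<inter> W p d c') \<le> card ((\<lambda>x. itm p x (fv p d c x mod p)) ` {x\<in>{..<p}. int p dvd poly F (int x)})"
    by (rule card_mono[OF _ sub]) auto
  also have "\<dots> \<le> card {x\<in>{..<p}. int p dvd poly F (int x)}" by (rule card_image_le) auto
  also have "\<dots> \<le> degree F" by (rule roots_bound[OF p ndvd])
  finally show ?thesis using degF by linarith
qed


lemma covered_le_OPT:
  assumes "J \<subseteq> {..<length I}" "card J \<le> k"
  shows "covered I J Q \<le> OPT k I Q"
  unfolding OPT_def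
proof (rule Max_ge)
  have "{covered I J Q |J. J \<subseteq> {..<length I} \<and> card J \<le> k} \<subseteq> (\<lambda>J. covered I J Q) ` Pow {..<length I}"
    by auto
  then show "finite {covered I J Q |J. J \<subseteq> {..<length I} \<and> card J \<le> k}"
    by (rule finite_subset) auto
  show "covered I J Q \<in> {covered I J Q |J. J \<subseteq> {..<length I} \<and> card J \<le> k}"
    using assms by blast
qed

lemma sum_pow2_less: "(\<Sum>i\<le>L. (2::nat)^i) < 2^(L+1)"
  by (induction L) auto

lemma card_bool_lists: "card {xs::bool list. length xs \<le> L} < 2^(L+1)"
proof -
  have "card {xs::bool list. length xs \<le> L} = card {xs::bool list. set xs \<subseteq> UNIV \<and> length xs \<le> L}" by simp
  also have "\<dots> = (\<Sum>i\<le>L. (card (UNIV::bool set))^i)" by (rule card_lists_length_le) simp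
  also have "\<dots> < 2^(L+1)" using sum_pow2_less by simp
  finally show ?thesis .
qed

lemma finite_bool_lists: "finite {xs::bool list. length xs \<le> L}"
  using finite_lists_length_le[of "UNIV::bool set" L] by simp

lemma card_inter_union_le:
  assumes "finite J"
  shows "card ((\<Union>i\<in>J. A i) \<inter> B) \<le> (\<Sum>i\<in>J. card (A i \<inter> B))"
proof -
  have "(\<Union>i\<in>J. A i) \<inter> B = (\<Union>i\<in>J. A i \<inter> B)" by auto
  then show ?thesis using card_UN_le[OF assms, of "\<lambda>i. A i \<inter> B"] by simp
qed


lemma fact_ge_pow: "fact T * T^j \<le> (fact (T + j) :: nat)"
proof (induction j)
  case 0 then show ?case by simp
next
  case (Suc j)
  have "fact T * T^Suc j = T * (fact T * T^j)" by (simp add: algebra_simps)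
  also have "\<dots> \<le> (T + Suc j) * fact (T + j)" using Suc by (intro mult_mono) auto
  also have "\<dots> = fact (T + Suc j)" by (simp add: algebra_simps)
  finally show ?case .
qed

lemma fact_big:
  fixes k :: nat assumes k: "k \<ge> 1"
  shows "\<exists>M. \<forall>m\<ge>M. 2^(m+1) * k^m < (fact m :: nat)"
proof -
  define T where "T = 4*k"
  define B where "B = 2*(2*k)^T"
  show ?thesis
  proof (intro exI allI impI)
    fix m assume m: "m \<ge> T + B"
    define j where "j = m - T"
    have mj: "m = T + j" using m unfolding j_def by simp
    have jB: "B < 2^j" using m less_exp[of j] unfolding j_def by linarith
    have pos: "0 < (2*k)^j" using k by simp
    have e1: "(2::nat)^(m+1) = 2 * 2^T * 2^j" unfolding mj by (simp add: power_add)
    have e2: "k^m = k^T * k^j" unfolding mj by (simp add: power_add)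
    have e3: "(2*k)^T = 2^T * k^T" "(2*k)^j = 2^j*k^j" by (simp_all only: power_mult_distrib)
    have "2^(m+1) * k^m = B * (2*k)^j" unfolding B_def e1 e2 e3 by (simp only: mult_ac)
    also have "\<dots> < 2^j * (2*k)^j" using jB pos by simp
    also have "\<dots> = (2*(2*k))^j" by (simp only: power_mult_distrib)
    also have "\<dots> = T^j" unfolding T_def by simp
    also have "\<dots> \<le> fact T * T^j" using fact_ge_1[of T] by simp
    also have "\<dots> \<le> fact m" using fact_ge_pow[of T j] mj by simp
    finally show "2^(m+1) * k^m < (fact m :: nat)" .
  qed
qed

lemma hard_core:
  fixes st :: static_stage and dy :: dynamic_stage
  assumes orac: "coverage_oracle k st dy"
    and p: "prime p" and mpd: "m \<le> p^d"
    and storage: "\<forall>I. set_system (p*p) m I \<longrightarrow> length (st (p*p) m k I) \<le> L"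
    and factm: "2^(L+1) * k^m < fact m"
    and r: "r * real k * real d < real p" "r \<ge> 0" and k: "k \<ge> 1"
  shows "\<not> ratio_at_most st dy (p*p) m k r"
proof
  assume ratio: "ratio_at_most st dy (p*p) m k r"
  define n where "n = p*p"
  have p0: "0 < p" using p prime_gt_0_nat by blast
  define Sys where "Sys \<sigma> = map (\<lambda>j. W p d (\<sigma> j)) [0..<m]" for \<sigma> :: "nat \<Rightarrow> nat"
  have len: "length (Sys \<sigma>) = m" for \<sigma> by (simp add: Sys_def)
  have nth: "j < m \<Longrightarrow> Sys \<sigma> ! j = W p d (\<sigma> j)" for \<sigma> j by (simp add: Sys_def)
  have ss: "set_system n m (Sys \<sigma>)" for \<sigma>
    unfolding set_system_def n_def using W_sub[OF p0] by (auto simp: Sys_def)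
  have Qs: "W p d c \<subseteq> {1..n}" for c unfolding n_def using W_sub[OF p0] .
  define DS where "DS \<sigma> = st n m k (Sys \<sigma>)" for \<sigma>
  have orc: "dy (DS \<sigma>) (W p d c) \<subseteq> {..<m} \<and> card (dy (DS \<sigma>) (W p d c)) \<le> k" for \<sigma> c
    using orac ss Qs unfolding coverage_oracle_def DS_def by blast
  have key: "inv \<sigma> c \<in> dy (DS \<sigma>) (W p d c)" if \<sigma>: "\<sigma> permutes {..<m}" and c: "c < m" for \<sigma> c
  proof (rule ccontr)
    assume nin: "inv \<sigma> c \<notin> dy (DS \<sigma>) (W p d c)"
    define j where "j = inv \<sigma> c"
    have jm: "j < m" using c permutes_in_image[OF permutes_inv[OF \<sigma>]] unfolding j_def by auto
    have sj: "\<sigma> j = c" unfolding j_def using permutes_inverses(1)[OF \<sigma>] by simp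
    define J where "J = dy (DS \<sigma>) (W p d c)"
    have J: "J \<subseteq> {..<m}" "card J \<le> k" using orc unfolding J_def by auto
    have finJ: "finite J" using J(1) finite_subset by blast
    have "covered (Sys \<sigma>) {j} (W p d c) = p"
      unfolding covered_def using nth[OF jm] sj card_W[OF p0] by simp
    moreover have "covered (Sys \<sigma>) {j} (W p d c) \<le> OPT k (Sys \<sigma>) (W p d c)"
      by (rule covered_le_OPT) (use jm len k in auto)
    ultimately have pO: "p \<le> OPT k (Sys \<sigma>) (W p d c)" by simp
    have "real (OPT k (Sys \<sigma>) (W p d c)) \<le> r * real (ALG st dy n m k (Sys \<sigma>) (W p d c))"
      using ratio ss Qs unfolding ratio_at_most_def n_def by blast
    moreover have "ALG st dy n m k (Sys \<sigma>) (W p d c) = card ((\<Union>i\<in>J. W p d (\<sigma> i)) \<inter> W p d c)"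
    proof -
      have "(\<Union>i\<in>J. Sys \<sigma> ! i) = (\<Union>i\<in>J. W p d (\<sigma> i))" using J(1) nth by (intro SUP_cong refl) auto
      then show ?thesis unfolding ALG_def covered_def J_def DS_def by simp
    qed
    moreover have "card ((\<Union>i\<in>J. W p d (\<sigma> i)) \<inter> W p d c) \<le> (\<Sum>i\<in>J. card (W p d (\<sigma> i) \<inter> W p d c))"
      by (rule card_inter_union_le[OF finJ])
    moreover have "(\<Sum>i\<in>J. card (W p d (\<sigma> i) \<inter> W p d c)) \<le> (\<Sum>i\<in>J. d)"
    proof (rule sum_mono)
      fix i assume i: "i \<in> J"
      have im: "i < m" using i J(1) by auto
      have "i \<noteq> j" using i nin unfolding J_def j_def by auto
      then have "\<sigma> i \<noteq> \<sigma> j" using permutes_inj[OF \<sigma>] by (simp add: inj_eq)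
      then have "\<sigma> i \<noteq> c" using sj by simp
      moreover have "\<sigma> i < m" using im permutes_in_image[OF \<sigma>] by auto
      ultimately show "card (W p d (\<sigma> i) \<inter> W p d c) \<le> d"
        using W_inter[OF p] c mpd by simp
    qed
    ultimately have A1: "real (OPT k (Sys \<sigma>) (W p d c)) \<le> r * real (ALG st dy n m k (Sys \<sigma>) (W p d c))"
      and A2: "ALG st dy n m k (Sys \<sigma>) (W p d c) \<le> card J * d" by simp_all
    have "r * real (ALG st dy n m k (Sys \<sigma>) (W p d c)) \<le> r * real (card J * d)"
      using A2 r(2) by (intro mult_left_mono) (simp_all only: of_nat_le_iff)
    with A1 have "real (OPT k (Sys \<sigma>) (W p d c)) \<le> r * real (card J * d)" by linarith
    also have "\<dots> \<le> r * real (k * d)" using J(2) r(2) by (intro mult_left_mono) (simp_all only: of_nat_le_iff mult_le_mono1)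
    also have "\<dots> < real p" using r(1) by (simp add: mult.assoc)
    finally show False using pO by simp
  qed
  define P where "P = {\<sigma>. \<sigma> permutes {..<m}}"
  define Ds where "Ds = {xs::bool list. length xs \<le> L}"
  define T where "T D = {\<sigma>\<in>P. DS \<sigma> = D}" for D
  have PU: "P \<subseteq> (\<Union>D\<in>Ds. T D)"
  proof
    fix \<sigma> assume "\<sigma> \<in> P"
    moreover have "DS \<sigma> \<in> Ds" using storage ss unfolding Ds_def DS_def n_def by auto
    ultimately show "\<sigma> \<in> (\<Union>D\<in>Ds. T D)" unfolding T_def by auto
  qed
  have cT: "card (T D) \<le> k^m" for D
  proof (cases "T D = {}")
    case True then show ?thesis by simp
  next
    case False
    then obtain \<sigma>0 where s0: "\<sigma>0 \<in> T D" by blast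
    then have D: "D = DS \<sigma>0" unfolding T_def by simp
    define A where "A c = dy D (W p d c)" for c
    have A: "A c \<subseteq> {..<m}" "card (A c) \<le> k" for c using orc D unfolding A_def by auto
    have inj: "inj_on (\<lambda>\<sigma>. restrict (inv \<sigma>) {..<m}) (T D)"
    proof (rule inj_onI)
      fix \<sigma> \<tau> assume s: "\<sigma> \<in> T D" and t: "\<tau> \<in> T D"
        and e: "restrict (inv \<sigma>) {..<m} = restrict (inv \<tau>) {..<m}"
      have ps: "\<sigma> permutes {..<m}" "\<tau> permutes {..<m}" using s t unfolding T_def P_def by auto
      have "inv \<sigma> x = inv \<tau> x" for x
      proof (cases "x < m")
        case True
        have "restrict (inv \<sigma>) {..<m} x = restrict (inv \<tau>) {..<m} x" using e by simp
        then show ?thesis using True by simp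
      next
        case False then show ?thesis
          using permutes_not_in[OF permutes_inv[OF ps(1)]] permutes_not_in[OF permutes_inv[OF ps(2)]] by simp
      qed
      then have "inv \<sigma> = inv \<tau>" by blast
      then have "inv (inv \<sigma>) = inv (inv \<tau>)" by simp
      then show "\<sigma> = \<tau>" using permutes_inv_inv[OF ps(1)] permutes_inv_inv[OF ps(2)] by simp
    qed
    have img: "(\<lambda>\<sigma>. restrict (inv \<sigma>) {..<m}) ` T D \<subseteq> PiE {..<m} A"
    proof
      fix f assume "f \<in> (\<lambda>\<sigma>. restrict (inv \<sigma>) {..<m}) ` T D"
      then obtain \<sigma> where s: "\<sigma> \<in> T D" and f: "f = restrict (inv \<sigma>) {..<m}" by blast
      have ps: "\<sigma> permutes {..<m}" and DD: "DS \<sigma> = D" using s unfolding T_def P_def by auto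
      show "f \<in> PiE {..<m} A" unfolding f A_def using key[OF ps] DD by auto
    qed
    have finPi: "finite (PiE {..<m} A)"
    proof (rule finite_PiE)
      show "finite {..<m}" by simp
      fix i show "finite (A i)" using A(1)[of i] finite_subset by blast
    qed
    have "card (T D) = card ((\<lambda>\<sigma>. restrict (inv \<sigma>) {..<m}) ` T D)" using card_image[OF inj] by simp
    also have "\<dots> \<le> card (PiE {..<m} A)" by (rule card_mono[OF finPi img])
    also have "\<dots> = (\<Prod>c<m. card (A c))" by (simp add: card_PiE)
    also have "\<dots> \<le> (\<Prod>c<m. k)" by (rule prod_mono) (use A in auto)
    finally show ?thesis by simp
  qed
  have finP: "finite P" unfolding P_def by (rule finite_permutations) simp
  have cP: "card P = fact m" unfolding P_def using card_permutations[of "{..<m}" m] by simp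
  have finDs: "finite Ds" unfolding Ds_def by (rule finite_bool_lists)
  have finU: "finite (\<Union>D\<in>Ds. T D)" by (rule finite_subset[OF _ finP]) (auto simp: T_def)
  have "card P \<le> card (\<Union>D\<in>Ds. T D)" by (rule card_mono[OF finU PU])
  also have "\<dots> \<le> (\<Sum>D\<in>Ds. card (T D))" by (rule card_UN_le[OF finDs])
  also have "\<dots> \<le> (\<Sum>D\<in>Ds. k^m)" by (rule sum_mono) (rule cT)
  also have "\<dots> = card Ds * k^m" by simp
  also have "\<dots> \<le> 2^(L+1) * k^m" using card_bool_lists[of L] unfolding Ds_def by (intro mult_right_mono) auto
  finally have "card P \<le> 2^(L+1) * k^m" .
  then show False using factm cP by linarith
qed

lemma ALG_le_OPT:
  assumes "coverage_oracle k st dy" "set_system n m I" "Q \<subseteq> {1..n}"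
  shows "ALG st dy n m k I Q \<le> OPT k I Q"
proof -
  have "dy (st n m k I) Q \<subseteq> {..<m} \<and> card (dy (st n m k I) Q) \<le> k"
    using assms unfolding coverage_oracle_def by blast
  moreover have "length I = m" using assms(2) by (simp add: set_system_def)
  ultimately show ?thesis unfolding ALG_def by (intro covered_le_OPT) auto
qed

lemma easy_case:
  fixes k :: nat and \<epsilon> \<delta> C :: real and N :: nat
    and st :: static_stage and dy :: dynamic_stage
  assumes k: "k \<ge> 1" and e0: "0 \<le> \<epsilon>" and e1: "\<epsilon> \<le> 1/2" and ed: "\<epsilon> < \<delta>" and C: "C > 0"
    and orc: "coverage_oracle k st dy"
  shows "\<exists>n m. m \<ge> N \<and> real m powr \<epsilon> \<le> sqrt (real n) \<and>
           \<not> ratio_at_most st dy n m k (C * real m powr (\<epsilon> - \<delta>) / (real k * sqrt (real k)))"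
proof -
  define a where "a = \<delta> - \<epsilon>"
  have a: "a > 0" using ed unfolding a_def by simp
  obtain m0 :: nat where m0: "C powr (1/a) < real m0" using reals_Archimedean2 by blast
  define m where "m = m0 + N + 1"
  have m1: "m \<ge> 1" "m \<ge> N" unfolding m_def by auto
  have mC: "C powr (1/a) < real m" using m0 unfolding m_def by simp
  have "C = (C powr (1/a)) powr a" using a C by (simp add: powr_powr)
  also have "\<dots> < real m powr a" using mC a C by (intro powr_less_mono2) auto
  finally have Cm: "C < real m powr a" .
  define r where "r = C * real m powr (\<epsilon> - \<delta>) / (real k * sqrt (real k))"
  have mpos: "real m > 0" using m1 by simp
  have ea: "\<epsilon> - \<delta> = - a" unfolding a_def by simp
  have "C * real m powr (\<epsilon> - \<delta>) = C / real m powr a"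
    unfolding ea powr_minus_divide by simp
  also have "\<dots> < 1" using Cm mpos by (simp add: divide_less_eq)
  finally have r1: "C * real m powr (\<epsilon> - \<delta>) < 1" .
  have k1: "real k \<ge> 1" using k by simp
  have sk: "sqrt (real k) \<ge> 1" using k1 by simp
  have "1 * 1 \<le> real k * sqrt (real k)" using k1 sk by (intro mult_mono) auto
  then have kk: "real k * sqrt (real k) \<ge> 1" by simp
  have r0: "r \<ge> 0" unfolding r_def using C by simp
  have r_lt: "r < 1"
  proof -
    have "r \<le> C * real m powr (\<epsilon> - \<delta>) / 1" unfolding r_def using kk C
      by (intro divide_left_mono) auto
    then show ?thesis using r1 by linarith
  qed
  define n where "n = m"
  have sq: "real m powr \<epsilon> \<le> sqrt (real n)"
  proof -
    have "real m powr \<epsilon> \<le> real m powr (1/2)" using m1 e1 by (intro powr_mono) auto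
    then show ?thesis unfolding n_def by (simp add: powr_half_sqrt)
  qed
  define I where "I = replicate m {1..n}"
  have ss: "set_system n m I" unfolding set_system_def I_def by simp
  have Q: "{1} \<subseteq> {1..n}" unfolding n_def using m1 by simp
  have "{1..n} \<inter> {1} = {1}" unfolding n_def using m1 by auto
  then have "covered I {0} {1} = 1" unfolding covered_def I_def using m1 by simp
  moreover have "covered I {0} {1} \<le> OPT k I {1}"
    by (rule covered_le_OPT) (use m1 k in \<open>auto simp: I_def\<close>)
  ultimately have O1: "OPT k I {1} \<ge> 1" by simp
  have AO: "ALG st dy n m k I {1} \<le> OPT k I {1}" by (rule ALG_le_OPT[OF orc ss Q])
  have "\<not> ratio_at_most st dy n m k r"
  proof
    assume "ratio_at_most st dy n m k r"
    then have "real (OPT k I {1}) \<le> r * real (ALG st dy n m k I {1})"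
      using ss Q unfolding ratio_at_most_def by blast
    also have "\<dots> \<le> r * real (OPT k I {1})" using AO r0 by (intro mult_left_mono) auto
    finally have "(1 - r) * real (OPT k I {1}) \<le> 0" by (simp add: algebra_simps)
    moreover have "(1 - r) * real (OPT k I {1}) > 0" using r_lt O1 by simp
    ultimately show False by linarith
  qed
  then show ?thesis using m1 sq unfolding r_def by blast
qed

theorem mainTheorem9:
  fixes k :: nat and \<epsilon> \<delta> C :: real and N :: nat
    and st :: static_stage and dy :: dynamic_stage
  assumes "k \<ge> 1" and "0 \<le> \<epsilon>" and "\<epsilon> \<le> 1/2"
    and "\<delta> > 0" and "C > 0"
    and "coverage_oracle k st dy"
    and "\<forall>n m I. set_system n m I \<longrightarrow> real m powr \<epsilon> \<le> sqrt (real n) \<longrightarrow>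
           real (length (st n m k I)) \<le> real n * real m powr (1 - 2 * \<epsilon>)"
  shows "\<exists>n m. m \<ge> N \<and> real m powr \<epsilon> \<le> sqrt (real n) \<and>
           \<not> ratio_at_most st dy n m k (C * real m powr (\<epsilon> - \<delta>) / (real k * sqrt (real k)))"
proof (cases "\<epsilon> < \<delta>")
  case True
  then show ?thesis using easy_case assms(1,2,3,5,6) by blast
next
  case False
  note k = assms(1) and e0 = assms(2) and e1 = assms(3) and dpos = assms(4) and C = assms(5)
    and orc = assms(6) and stor = assms(7)
  have de: "\<delta> \<le> \<epsilon>" using False by simp
  have epos: "\<epsilon> > 0" using de dpos by simp
  define d where "d = nat \<lceil>1/\<epsilon>\<rceil>"
  have d_ge: "real d \<ge> 1/\<epsilon>" unfolding d_def by (rule real_nat_ceiling_ge)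
  have ie: "1/\<epsilon> \<ge> 2" using epos e1 by (simp add: field_simps)
  obtain M0 where M0: "\<forall>m\<ge>M0. 2^(m+1) * k^m < (fact m :: nat)" using fact_big[OF k] by blast
  define B where "B = N + M0 + nat \<lceil>(C * real d) powr (\<epsilon>/\<delta>)\<rceil> + 1"
  obtain p where p: "prime p" "p > B" using bigger_prime by blast
  have p1: "real p \<ge> 1" using p(1) prime_ge_1_nat by simp
  have p0: "real p > 0" using p1 by simp
  have pCd: "real p > (C * real d) powr (\<epsilon>/\<delta>)"
  proof -
    have "(C * real d) powr (\<epsilon>/\<delta>) \<le> real (nat \<lceil>(C * real d) powr (\<epsilon>/\<delta>)\<rceil>)" by (rule real_nat_ceiling_ge)
    also have "\<dots> < real p" using p(2) unfolding B_def by simp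
    finally show ?thesis .
  qed
  define X where "X = real p powr (1/\<epsilon>)"
  have X0: "X \<ge> 0" unfolding X_def by simp
  define m where "m = nat \<lfloor>X\<rfloor>"
  have mX: "real m = of_int \<lfloor>X\<rfloor>" unfolding m_def using X0 by simp
  have mle: "real m \<le> X" using mX by simp
  have mlt: "X < real m + 1" using mX by linarith
  have "real p powr 1 \<le> real p powr (1/\<epsilon>)" using p1 ie by (intro powr_mono) auto
  then have Xp: "real p \<le> X" unfolding X_def using p0 by simp
  have mp: "m \<ge> p"
  proof -
    have "int p \<le> \<lfloor>X\<rfloor>" using Xp by (simp add: le_floor_iff)
    then show ?thesis unfolding m_def by simp
  qed
  have mpos: "real m > 0" using mp p1 by simp
  have mpd: "m \<le> p^d"
  proof -
    have "X \<le> real p powr real d" unfolding X_def using p1 d_ge by (rule powr_mono[rotated])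
    also have "\<dots> = real p ^ d" using p0 by (simp add: powr_realpow)
    finally have "real m \<le> real p ^ d" using mle by linarith
    then have "real m \<le> real (p^d)" by simp
    then show ?thesis by (simp only: of_nat_le_iff)
  qed
  have Xe: "X powr \<epsilon> = real p" unfolding X_def using epos by (simp add: powr_powr)
  have sqp: "sqrt (real (p*p)) = real p" by simp
  have sq: "real m powr \<epsilon> \<le> sqrt (real (p*p))"
  proof -
    have "real m powr \<epsilon> \<le> X powr \<epsilon>" using mle e0 by (intro powr_mono2) auto
    then show ?thesis using Xe sqp by simp
  qed
  have storage: "\<forall>I. set_system (p*p) m I \<longrightarrow> length (st (p*p) m k I) \<le> m"
  proof (intro allI impI)
    fix I assume ss: "set_system (p*p) m I"
    have "real (length (st (p*p) m k I)) \<le> real (p*p) * real m powr (1 - 2 * \<epsilon>)"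
      using stor ss sq by blast
    also have "\<dots> \<le> real (p*p) * X powr (1 - 2*\<epsilon>)"
      using mle e1 by (intro mult_left_mono powr_mono2) auto
    also have "\<dots> = real p powr 2 * real p powr ((1 - 2*\<epsilon>)/\<epsilon>)"
      unfolding X_def using p0 by (simp add: powr_powr power2_eq_square flip: powr_realpow)
    also have "\<dots> = real p powr (2 + (1 - 2*\<epsilon>)/\<epsilon>)" by (simp add: powr_add)
    also have "2 + (1 - 2*\<epsilon>)/\<epsilon> = 1/\<epsilon>" using epos by (simp add: field_simps)
    also have "real p powr (1/\<epsilon>) = X" unfolding X_def ..
    finally have "real (length (st (p*p) m k I)) < real m + 1" using mlt by linarith
    then show "length (st (p*p) m k I) \<le> m" by linarith
  qed
  have factm: "2^(m+1) * k^m < (fact m :: nat)" using M0 mp p(2) unfolding B_def by auto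
  define r where "r = C * real m powr (\<epsilon> - \<delta>) / (real k * sqrt (real k))"
  have r0: "r \<ge> 0" unfolding r_def using C by simp
  have k1: "real k \<ge> 1" using k by simp
  have sk: "sqrt (real k) \<ge> 1" using k1 by simp
  define Y where "Y = C * real m powr (\<epsilon> - \<delta>)"
  have Y0: "Y \<ge> 0" unfolding Y_def using C by simp
  have rk: "r * real k = Y / sqrt (real k)" unfolding r_def Y_def using k1 by (simp add: field_simps)
  have rkY: "r * real k \<le> Y"
  proof -
    have "Y / sqrt (real k) \<le> Y / 1" using Y0 sk by (intro divide_left_mono) auto
    then show ?thesis using rk by simp
  qed
  have mpow: "real m powr (\<epsilon> - \<delta>) \<le> real p powr ((\<epsilon> - \<delta>)/\<epsilon>)"
  proof -
    have "real m powr (\<epsilon> - \<delta>) \<le> X powr (\<epsilon> - \<delta>)" using mle de by (intro powr_mono2) auto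
    also have "\<dots> = real p powr ((\<epsilon> - \<delta>)/\<epsilon>)" unfolding X_def by (simp add: powr_powr)
    finally show ?thesis .
  qed
  have "1/\<epsilon> > 0" using epos by simp
  then have "real d > 0" using d_ge by linarith
  then have Cd0: "C * real d > 0" using C by simp
  have Cdp: "C * real d < real p powr (\<delta>/\<epsilon>)"
  proof -
    have "C * real d = ((C * real d) powr (\<epsilon>/\<delta>)) powr (\<delta>/\<epsilon>)"
      using Cd0 epos dpos by (simp add: powr_powr)
    also have "\<dots> < real p powr (\<delta>/\<epsilon>)"
      using pCd epos dpos by (intro powr_less_mono2) auto
    finally show ?thesis .
  qed
  have rcond: "r * real k * real d < real p"
  proof -
    have "r * real k * real d \<le> Y * real d" using rkY by (intro mult_right_mono) auto
    also have "\<dots> = (C * real d) * real m powr (\<epsilon> - \<delta>)" unfolding Y_def by simp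
    also have "\<dots> \<le> (C * real d) * real p powr ((\<epsilon> - \<delta>)/\<epsilon>)"
      using mpow Cd0 by (intro mult_left_mono) auto
    also have "\<dots> < real p powr (\<delta>/\<epsilon>) * real p powr ((\<epsilon> - \<delta>)/\<epsilon>)"
      using Cdp p0 by (intro mult_strict_right_mono) auto
    also have "\<dots> = real p powr (\<delta>/\<epsilon> + (\<epsilon> - \<delta>)/\<epsilon>)" by (simp add: powr_add)
    also have "\<delta>/\<epsilon> + (\<epsilon> - \<delta>)/\<epsilon> = 1" using epos by (simp add: field_simps)
    finally show ?thesis by simp
  qed
  have "\<not> ratio_at_most st dy (p*p) m k r"
    by (rule hard_core[OF orc p(1) mpd storage _ rcond r0 k]) (use factm in simp)
  moreover have "m \<ge> N" using mp p(2) unfolding B_def by simp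
  ultimately show ?thesis using sq unfolding r_def by blast
qed

end
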